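(* Assume the setting described in the context. Let $\pi$ be a permutation of $F$. If $\tau$ is a $\pi$-stable walk with word $W$ and initial state $\sigma_1$, then $R_W\in\mathrm{Ind}(F_{\sigma_1})$.
   Context: Setting: $\Omega$ is a finite set and $F$ a finite set of flaws, each a nonempty subset of $\Omega$; $F_\sigma=\{f:\sigma\in f\}$. For $\sigma\in\Omega$ and $f\in F_\sigma$ there is a probability distribution $\rho(\cdot\mid f,\sigma)$ with support $A(f,\sigma)$. A walk is a sequence $\sigma_1\xrightarrow{w_1}\sigma_2\cdots\xrightarrow{w_t}\sigma_{t+1}$ with $w_i\in F_{\sigma_i}$ and $\sigma_{i+1}\in A(w_i,\sigma_i)$, with word $w_1\ldots w_t$. $\sim$ is a symmetric relation on $F$ (loops allowed), $\Gamma(f)=\{g:f\sim g\}$, $\Gamma^+(f)=\Gamma(f)\cup\{f\}$, $\Gamma^+(S)=\bigcup_{f\in S}\Gamma^+(f)$. It is assumed that for every step $\sigma\xrightarrow{f}\sigma'$, $F_{\sigma'}\subseteq(F_\sigma\setminus\{f\})\cup\Gamma(f)$. $S$ is independent if $f\not\sim g$ for distinct $f,g\in S$; $\mathrm{Ind}(S)$ is the family of independent subsets of $S$. A sequence $(I_1,\ldots,I_s)$, $s\ge1$, is stable if $I_r\in\mathrm{Ind}(F)$ and $I_{r+1}\subseteq\Gamma^+(I_r)$. A word $W$ is stable if $W=W_1\ldots W_s$ with nonempty words $W_r$ of distinct flaws whose flaw sets $I_r$ form a stable sequence. It is $\pi$-stable if additionally each $W_r$ is strictly increasing in the order induced by $\pi$.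 $R_W=I_1$ (and $R_W=\varnothing$ for the empty word). A walk is $\pi$-stable if its word is. *)

theory Defs
  imports "HOL-Probability.Probability_Mass_Function"
begin

text \<open>Flaws are subsets of the state space; states have type 's, flaws type 's set.
  The distribution rho(.|f,sigma) is a pmf; its support A(f,sigma) is set_pmf.\<close>

definition Fsig :: "'s set set \<Rightarrow> 's \<Rightarrow> 's set set" where
  "Fsig F \<sigma> = {f \<in> F. \<sigma> \<in> f}"

definition Gam :: "'s set set \<Rightarrow> ('s set \<Rightarrow> 's set \<Rightarrow> bool) \<Rightarrow> 's set \<Rightarrow> 's set set" where
  "Gam F adj f = {g \<in> F. adj f g}"

definition GamP :: "'s set set \<Rightarrow> ('s set \<Rightarrow> 's set \<Rightarrow> bool) \<Rightarrow> 's set set \<Rightarrow> 's set set" where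
  "GamP F adj S = (\<Union>f\<in>S. Gam F adj f \<union> {f})"

definition indep :: "('s set \<Rightarrow> 's set \<Rightarrow> bool) \<Rightarrow> 's set set \<Rightarrow> bool" where
  "indep adj S = (\<forall>f\<in>S. \<forall>g\<in>S. f \<noteq> g \<longrightarrow> \<not> adj f g)"

definition Ind :: "('s set \<Rightarrow> 's set \<Rightarrow> bool) \<Rightarrow> 's set set \<Rightarrow> 's set set set" where
  "Ind adj S = {I. I \<subseteq> S \<and> indep adj I}"

text \<open>A walk: states ss = [sigma_1,...,sigma_{t+1}], word ws = [w_1,...,w_t].\<close>
definition is_walk :: "'s set set \<Rightarrow> ('s set \<Rightarrow> 's \<Rightarrow> 's pmf) \<Rightarrow> 's list \<Rightarrow> 's set list \<Rightarrow> bool" where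
  "is_walk F rho ss ws \<longleftrightarrow> length ss = Suc (length ws) \<and>
     (\<forall>i < length ws. ws ! i \<in> Fsig F (ss ! i) \<and> ss ! Suc i \<in> set_pmf (rho (ws ! i) (ss ! i)))"

definition stable_seq :: "'s set set \<Rightarrow> ('s set \<Rightarrow> 's set \<Rightarrow> bool) \<Rightarrow> 's set set list \<Rightarrow> bool" where
  "stable_seq F adj Is \<longleftrightarrow> Is \<noteq> [] \<and> (\<forall>r < length Is. Is ! r \<in> Ind adj F) \<and>
     (\<forall>r. Suc r < length Is \<longrightarrow> Is ! Suc r \<subseteq> GamP F adj (Is ! r))"

text \<open>Ws is a decomposition W = W_1 ... W_s witnessing that W is pi-stable; the order
  induced by pi is f < g iff p f < p g.\<close>
definition pi_stable_decomp :: "'s set set \<Rightarrow> ('s set \<Rightarrow> 's set \<Rightarrow> bool) \<Rightarrow> ('s set \<Rightarrow> nat)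
     \<Rightarrow> 's set list \<Rightarrow> 's set list list \<Rightarrow> bool" where
  "pi_stable_decomp F adj p W Ws \<longleftrightarrow> W = concat Ws \<and>
     (\<forall>Wr \<in> set Ws. Wr \<noteq> [] \<and> distinct Wr \<and> sorted_wrt (\<lambda>f g. p f < p g) Wr) \<and>
     stable_seq F adj (map set Ws)"

definition pi_stable_word :: "'s set set \<Rightarrow> ('s set \<Rightarrow> 's set \<Rightarrow> bool) \<Rightarrow> ('s set \<Rightarrow> nat)
     \<Rightarrow> 's set list \<Rightarrow> bool" where
  "pi_stable_word F adj p W \<longleftrightarrow> (\<exists>Ws. pi_stable_decomp F adj p W Ws)"

end

theory Submission
  imports Defs
begin

theorem lemma3:
  fixes Omega :: "'s set" and F :: "'s set set"
    and rho :: "'s set \<Rightarrow> 's \<Rightarrow> 's pmf"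
    and adj :: "'s set \<Rightarrow> 's set \<Rightarrow> bool"
    and p :: "'s set \<Rightarrow> nat"
    and ss :: "'s list" and W :: "'s set list" and Ws :: "'s set list list"
  assumes "finite Omega" and "finite F"
    and "\<forall>f\<in>F. f \<noteq> {} \<and> f \<subseteq> Omega"
    and "\<forall>\<sigma>\<in>Omega. \<forall>f\<in>Fsig F \<sigma>. set_pmf (rho f \<sigma>) \<subseteq> Omega"
    and "\<forall>f\<in>F. \<forall>g\<in>F. adj f g \<longrightarrow> adj g f"
    and "\<forall>\<sigma>\<in>Omega. \<forall>f\<in>Fsig F \<sigma>. \<forall>\<sigma>'\<in>set_pmf (rho f \<sigma>).
           Fsig F \<sigma>' \<subseteq> (Fsig F \<sigma> - {f}) \<union> Gam F adj f"
    and "bij_betw p F {..<card F}"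
    and "hd ss \<in> Omega"
    and "is_walk F rho ss W"
    and "pi_stable_decomp F adj p W Ws"
  shows "set (hd Ws) \<in> Ind adj (Fsig F (hd ss))"
proof -
  note A = assms
  have walk: "length ss = Suc (length W)"
    "\<And>i. i < length W \<Longrightarrow> W ! i \<in> Fsig F (ss ! i) \<and> ss ! Suc i \<in> set_pmf (rho (W ! i) (ss ! i))"
    using A(9) unfolding is_walk_def by auto
  have dec: "W = concat Ws" "\<And>Wr. Wr \<in> set Ws \<Longrightarrow> distinct Wr" "stable_seq F adj (map set Ws)"
    using A(10) unfolding pi_stable_decomp_def by auto
  have "Ws \<noteq> []" using dec(3) unfolding stable_seq_def by auto
  then obtain V Vs where Ws: "Ws = V # Vs" by (cases Ws) auto
  have dV: "distinct V" using dec(2) Ws by auto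
  have IV: "set V \<in> Ind adj F" using dec(3) Ws unfolding stable_seq_def by force
  hence indV: "indep adj (set V)" unfolding Ind_def by auto
  have W: "W = V @ concat Vs" using dec(1) Ws by simp
  have ss0: "hd ss = ss ! 0" using walk(1) by (cases ss) auto
  have om: "\<And>i. i \<le> length W \<Longrightarrow> ss ! i \<in> Omega"
  proof -
    fix i show "i \<le> length W \<Longrightarrow> ss ! i \<in> Omega"
    proof (induction i)
      case 0 then show ?case using A(8) ss0 by simp
    next
      case (Suc i)
      hence "ss ! i \<in> Omega" "i < length W" by auto
      then show ?case using walk(2)[of i] A(4) by blast
    qed
  qed
  have key: "\<And>j d. j < length V \<Longrightarrow> d \<le> j \<Longrightarrow> V ! j \<in> Fsig F (ss ! (j - d))"
  proof -
    fix j d assume j: "j < length V"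
    show "d \<le> j \<Longrightarrow> V ! j \<in> Fsig F (ss ! (j - d))"
    proof (induction d)
      case 0
      have "W ! j = V ! j" using W j by (simp add: nth_append)
      then show ?case using walk(2)[of j] j W by auto
    next
      case (Suc d)
      define i where "i = j - Suc d"
      have ji: "j - d = Suc i" using Suc.prems i_def by simp
      have il: "i < length W" "i < j" using Suc.prems j W i_def by auto
      have Wi: "W ! i = V ! i" using W il j by (simp add: nth_append)
      have st: "W ! i \<in> Fsig F (ss ! i)" "ss ! Suc i \<in> set_pmf (rho (W ! i) (ss ! i))"
        using walk(2)[OF il(1)] by auto
      have omi: "ss ! i \<in> Omega" using om il by simp
      have sub: "Fsig F (ss ! Suc i) \<subseteq> (Fsig F (ss ! i) - {W ! i}) \<union> Gam F adj (W ! i)"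
        using A(6) omi st by blast
      have IH: "V ! j \<in> Fsig F (ss ! Suc i)" using Suc ji by simp
      have ne: "V ! i \<noteq> V ! j" using dV il j by (simp add: nth_eq_iff_index_eq)
      have na: "\<not> adj (V ! i) (V ! j)" using indV ne il j unfolding indep_def by auto
      have "V ! j \<in> Fsig F (ss ! i)" using sub IH ne na Wi unfolding Gam_def by auto
      then show ?case using i_def by simp
    qed
  qed
  have "set V \<subseteq> Fsig F (hd ss)"
  proof
    fix f assume "f \<in> set V"
    then obtain j where "j < length V" "f = V ! j" by (auto simp: in_set_conv_nth)
    then show "f \<in> Fsig F (hd ss)" using key[of j j] ss0 by simp
  qed
  then show ?thesis using indV Ws unfolding Ind_def by simp
qed

end
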